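(* Let $g(t)=\sum_{n\ge0}g_nt^n$ be a real formal power series with $g_0=1$ and $f(t)=\sum_{n\ge1}f_nt^n$ a real formal power series with $f_1\neq0$. Put $z_0=f_1$, $w_0=g_1$ and let \[ Z(t)=\frac{f(t)-z_0t\,g(t)}{f(t)}+z_0=\sum_{k\ge0}z_kt^k,\qquad W(t)=\frac{(1-w_0t)g(t)-1}{f(t)}+w_0=\sum_{k\ge0}w_kt^k . \] Let $J$ be the infinite matrix with $0$th column $(w_0,w_1,w_2,\dots)^T$, $1$st column $(z_0,z_1,z_2,\dots)^T$, entries $J_{i,i+1}=1$ for $i\ge1$, and all other entries $0$. If $J$ is totally positive, then the quasi-Riordan array $[g,f]$ is totally positive.
   Context: The quasi-Riordan array $[g,f]$ is the infinite lower triangular matrix $(r_{n,k})_{n,k\ge0}$ with $r_{n,0}=g_n$ and $r_{n,k}=f_{n-k+1}$ for $k\ge1$ (with $f_j=0$ for $j\le0$); its columns have generating functions $g,f,tf,t^2f,\dots$. The matrix $J$ is called the production matrix of $[g,f]$ (the data $A(t)=1$, $Z$, $W$ being the $A$-, $Z$-, $W$-sequences of $[g,f]$). An infinite matrix is totally positive (TP) if all its minors are nonnegative. *)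

theory Defs
  imports "HOL-Computational_Algebra.Formal_Power_Series" "Jordan_Normal_Form.Determinant"
begin

text \<open>Infinite matrices are functions nat => nat => real (row index first).
  A matrix is totally positive if every minor (rows r 0 < ... < r (k-1),
  columns c 0 < ... < c (k-1)) is nonnegative.\<close>

definition totally_positive :: "(nat \<Rightarrow> nat \<Rightarrow> real) \<Rightarrow> bool" where
  "totally_positive A \<longleftrightarrow>
     (\<forall>k (r::nat \<Rightarrow> nat) (c::nat \<Rightarrow> nat).
        strict_mono_on {..<k} r \<longrightarrow> strict_mono_on {..<k} c \<longrightarrow>
        det (mat k k (\<lambda>(i, j). A (r i) (c j))) \<ge> 0)"

definition quasi_riordan :: "real fps \<Rightarrow> real fps \<Rightarrow> nat \<Rightarrow> nat \<Rightarrow> real" where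
  "quasi_riordan g f n k =
     (if k = 0 then fps_nth g n else if k \<le> n + 1 then fps_nth f (n + 1 - k) else 0)"

definition Z_seq :: "real fps \<Rightarrow> real fps \<Rightarrow> real fps" where
  "Z_seq g f = (f - fps_const (fps_nth f 1) * fps_X * g) / f + fps_const (fps_nth f 1)"

definition W_seq :: "real fps \<Rightarrow> real fps \<Rightarrow> real fps" where
  "W_seq g f = ((1 - fps_const (fps_nth g 1) * fps_X) * g - 1) / f + fps_const (fps_nth g 1)"

definition prod_matrix :: "real fps \<Rightarrow> real fps \<Rightarrow> nat \<Rightarrow> nat \<Rightarrow> real" where
  "prod_matrix g f i j =
     (if j = 0 then fps_nth (W_seq g f) i
      else if j = 1 then fps_nth (Z_seq g f) i
      else if j = i + 1 then 1 else 0)"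

end

theory Submission
  imports Defs
begin

lemma div_mult_cancel_fps:
  fixes a f :: "real fps"
  assumes "fps_nth f 0 = 0" "fps_nth f 1 \<noteq> 0" "fps_nth a 0 = 0"
  shows "a / f * f = a"
proof (cases "a = 0")
  case True thus ?thesis by simp
next
  case False
  have f0: "f \<noteq> 0" using assms by auto
  have sf: "subdegree f = 1" using assms by (intro subdegreeI) auto
  have "subdegree a \<noteq> 0" using assms False by (simp add: subdegree_eq_0_iff)
  then show ?thesis using fps_times_divide_eq[OF f0] sf by simp
qed

lemma conv_coeff:
  fixes q f :: "real fps"
  assumes "fps_nth q 0 = 0" "fps_nth f 0 = 0"
  shows "fps_nth (q*f) (Suc n) = (\<Sum>l<Suc n. (if l = 0 then 0 else fps_nth f (Suc n - l) * fps_nth q l))"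
proof -
  have "fps_nth (q*f) (Suc n) = (\<Sum>i=0..Suc n. fps_nth q i * fps_nth f (Suc n - i))" by (rule fps_mult_nth)
  also have "\<dots> = (\<Sum>i=0..n. fps_nth q i * fps_nth f (Suc n - i))" using assms by (simp add: sum.atLeast0_atMost_Suc)
  also have "\<dots> = (\<Sum>l<Suc n. (if l = 0 then 0 else fps_nth f (Suc n - l) * fps_nth q l))"
    by (rule sum.cong) (auto simp: assms atLeast0AtMost lessThan_Suc_atMost)
  finally show ?thesis .
qed

lemma coeff_aux: "fps_nth ((1 - fps_const (c::real) * fps_X) * g - 1) (Suc n) = fps_nth g (Suc n) - c * fps_nth g n"
  by (simp add: algebra_simps)

lemma coeff_aux2: "fps_nth ((f::real fps) - fps_const c * fps_X * g) (Suc n) = fps_nth f (Suc n) - c * fps_nth g n"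
  by (simp add: algebra_simps)

lemma qr_prod:
  fixes g f :: "real fps"
  assumes g0: "fps_nth g 0 = 1" and f0: "fps_nth f 0 = 0" and f1: "fps_nth f 1 \<noteq> 0" and nM: "n < M"
  shows "quasi_riordan g f (Suc n) j = (\<Sum>l<M. quasi_riordan g f n l * prod_matrix g f l j)"
proof -
  define R where "R = quasi_riordan g f"
  define P where "P = prod_matrix g f"
  define w0 where "w0 = fps_nth g 1"
  define z0 where "z0 = fps_nth f 1"
  define qW where "qW = ((1 - fps_const w0 * fps_X) * g - 1) / f"
  define qZ where "qZ = (f - fps_const z0 * fps_X * g) / f"
  have W: "W_seq g f = qW + fps_const w0" unfolding W_seq_def qW_def w0_def by simp
  have Z: "Z_seq g f = qZ + fps_const z0" unfolding Z_seq_def qZ_def z0_def by simp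
  have aW: "qW * f = (1 - fps_const w0 * fps_X) * g - 1"
    unfolding qW_def by (rule div_mult_cancel_fps) (use f0 f1 g0 in simp_all)
  have aZ: "qZ * f = f - fps_const z0 * fps_X * g"
    unfolding qZ_def by (rule div_mult_cancel_fps) (use f0 f1 g0 in simp_all)
  have "fps_nth (qW * f) 1 = fps_nth qW 0 * fps_nth f 1" using f0 by (simp add: fps_mult_nth_1)
  moreover have "fps_nth (qW * f) 1 = 0" unfolding aW using coeff_aux[of w0 g 0] g0 w0_def by simp
  ultimately have qW0: "fps_nth qW 0 = 0" using f1 f0 by simp
  have "fps_nth (qZ * f) 1 = fps_nth qZ 0 * fps_nth f 1" using f0 by (simp add: fps_mult_nth_1)
  moreover have "fps_nth (qZ * f) 1 = 0" unfolding aZ using coeff_aux2[of f z0 g 0] g0 z0_def by simp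
  ultimately have qZ0: "fps_nth qZ 0 = 0" using f1 f0 by simp
  have Rz: "R n l = 0" if "l > n" for l using f0 that by (auto simp: R_def quasi_riordan_def)
  have Rs: "R n l = (if l = 0 then fps_nth g n else fps_nth f (Suc n - l))" if "l < Suc n" for l
    using that by (auto simp: R_def quasi_riordan_def)
  have red: "(\<Sum>l<M. R n l * P l j) = (\<Sum>l<Suc n. R n l * P l j)"
    by (rule sum.mono_neutral_right) (use nM Rz in auto)
  have gen: "(\<Sum>l<Suc n. R n l * fps_nth (q + fps_const c) l) = fps_nth g n * c + fps_nth (q * f) (Suc n)"
    if q0: "fps_nth q 0 = 0" for q c
  proof -
    have "(\<Sum>l<Suc n. R n l * fps_nth (q + fps_const c) l) =
       (\<Sum>l<Suc n. (if l = 0 then fps_nth g n * c else 0) + (if l = 0 then 0 else fps_nth f (Suc n - l) * fps_nth q l))"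
      by (rule sum.cong) (auto simp: Rs q0)
    also have "\<dots> = fps_nth g n * c + fps_nth (q * f) (Suc n)"
      by (simp add: sum.distrib conv_coeff[OF q0 f0])
    finally show ?thesis .
  qed
  consider "j = 0" | "j = 1" | "j \<ge> 2" by linarith
  then have "R (Suc n) j = (\<Sum>l<Suc n. R n l * P l j)"
  proof cases
    case 1
    have "(\<Sum>l<Suc n. R n l * P l j) = (\<Sum>l<Suc n. R n l * fps_nth (qW + fps_const w0) l)"
      using 1 by (simp add: P_def prod_matrix_def W)
    also have "\<dots> = fps_nth g (Suc n)" unfolding gen[OF qW0] aW coeff_aux by simp
    finally show ?thesis using 1 by (simp add: R_def quasi_riordan_def)
  next
    case 2
    have "(\<Sum>l<Suc n. R n l * P l j) = (\<Sum>l<Suc n. R n l * fps_nth (qZ + fps_const z0) l)"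
      using 2 by (simp add: P_def prod_matrix_def Z)
    also have "\<dots> = fps_nth f (Suc n)" unfolding gen[OF qZ0] aZ coeff_aux2 by simp
    finally show ?thesis using 2 by (simp add: R_def quasi_riordan_def)
  next
    case 3
    have "(\<Sum>l<Suc n. R n l * P l j) = (\<Sum>l<Suc n. if l = j - 1 then R n l else 0)"
      by (rule sum.cong) (use 3 in \<open>auto simp: P_def prod_matrix_def\<close>)
    also have "\<dots> = (if j - 1 < Suc n then R n (j - 1) else 0)" by simp
    also have "\<dots> = R (Suc n) j" using 3 f0
      by (auto simp: R_def quasi_riordan_def Suc_diff_le)
    finally show ?thesis by simp
  qed
  then show ?thesis using red by (simp add: R_def P_def)
qed


definition SM :: "nat \<Rightarrow> nat \<Rightarrow> (nat \<Rightarrow> nat) set" where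
  "SM k m = {s. strict_mono_on {..<k} s \<and> (\<forall>i<k. s i < m) \<and> (\<forall>i. k \<le> i \<longrightarrow> s i = i)}"

lemma sm_list:
  assumes "strict_mono_on {..<k} (s::nat \<Rightarrow> nat)"
  shows "sorted_list_of_set (s ` {..<k}) = map s [0..<k]"
proof -
  have inj: "inj_on s {..<k}" using assms by (rule strict_mono_on_imp_inj_on)
  have "sorted_wrt (<) (map (\<lambda>x. x) (map s [0..<k])) \<and> set (map s [0..<k]) = s ` {..<k}
     \<and> length (map s [0..<k]) = card (s ` {..<k})"
    using assms inj by (auto simp: sorted_wrt_iff_nth_less card_image strict_mono_on_def)
  then show ?thesis
    using sorted_list_of_set_unique[of "s ` {..<k}" "map s [0..<k]"] by auto
qed

lemma sm_unique:
  assumes "strict_mono_on {..<k} (s::nat \<Rightarrow> nat)" "strict_mono_on {..<k} s'"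
    "s ` {..<k} = s' ` {..<k}" "i < k"
  shows "s i = s' i"
proof -
  have "map s [0..<k] = map s' [0..<k]" using sm_list[OF assms(1)] sm_list[OF assms(2)] assms(3) by metis
  then show ?thesis using assms(4) by simp
qed

lemma SM_inj:
  assumes s: "s \<in> SM k m" and s': "s' \<in> SM k m" and p: "p permutes {0..<k}" and p': "p' permutes {0..<k}"
    and eq: "s \<circ> p = s' \<circ> p'"
  shows "s = s' \<and> p = p'"
proof -
  have pim: "p ` {..<k} = {..<k}" "p' ` {..<k} = {..<k}"
    using permutes_image[OF p] permutes_image[OF p'] by (auto simp: atLeast0LessThan)
  have "s ` {..<k} = (s \<circ> p) ` {..<k}" using pim by (metis image_comp)
  also have "\<dots> = (s' \<circ> p') ` {..<k}" using eq by simp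
  also have "\<dots> = s' ` {..<k}" using pim by (metis image_comp)
  finally have im: "s ` {..<k} = s' ` {..<k}" .
  have ss: "s = s'"
  proof
    fix i show "s i = s' i"
    proof (cases "i < k")
      case True then show ?thesis using sm_unique[OF _ _ im True] s s' by (auto simp: SM_def)
    next
      case False then show ?thesis using s s' by (auto simp: SM_def)
    qed
  qed
  have inj: "inj_on s {..<k}" using s by (auto simp: SM_def intro: strict_mono_on_imp_inj_on)
  have pp: "p = p'"
  proof
    fix i show "p i = p' i"
    proof (cases "i < k")
      case True
      have "p i < k" "p' i < k" using True pim by auto
      moreover have "s (p i) = s (p' i)" using eq ss by (metis comp_apply)
      ultimately show ?thesis using inj inj_onD by (metis lessThan_iff)
    next
      case False then show ?thesis using permutes_not_in[OF p] permutes_not_in[OF p'] by simp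
    qed
  qed
  show ?thesis using ss pp by simp
qed

lemma SM_surj:
  assumes f: "\<forall>i<k. f i < m" "\<forall>i. k \<le> i \<longrightarrow> f i = i" and inj: "inj_on f {..<k}"
  shows "\<exists>s\<in>SM k m. \<exists>p. p permutes {0..<k} \<and> f = s \<circ> p"
proof -
  define S where "S = f ` {..<k}"
  define L where "L = sorted_list_of_set S"
  have cS: "card S = k" using inj by (simp add: S_def card_image)
  have fS: "finite S" by (simp add: S_def)
  have lenL: "length L = k" using cS fS by (simp add: L_def)
  have setL: "set L = S" using fS by (simp add: L_def)
  have sortL: "sorted_wrt (<) L" by (simp add: L_def)
  define s where "s i = (if i < k then L ! i else i)" for i
  have sm: "strict_mono_on {..<k} s"
    unfolding strict_mono_on_def s_def using sortL lenL by (auto intro: sorted_wrt_nth_less)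
  have sim: "s ` {..<k} = S"
  proof -
    have "s ` {..<k} = (\<lambda>i. L ! i) ` {..<length L}" using lenL by (auto simp: s_def)
    also have "\<dots> = set L" by (auto simp: set_conv_nth)
    finally show ?thesis using setL by simp
  qed
  have sm_lt: "s i < m" if "i < k" for i
  proof -
    have "s i \<in> f ` {..<k}" using that sim S_def by blast
    then show ?thesis using f by auto
  qed
  have sInSM: "s \<in> SM k m"
    using sm sm_lt unfolding SM_def by (auto simp: s_def)
  have injs: "inj_on s {..<k}" using sm by (rule strict_mono_on_imp_inj_on)
  have bs: "bij_betw s {..<k} S" using injs sim by (simp add: bij_betw_def)
  have bf: "bij_betw f {..<k} S" using inj by (simp add: bij_betw_def S_def)
  define p where "p i = (if i < k then the_inv_into {..<k} s (f i) else i)" for i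
  have bp0: "bij_betw (the_inv_into {..<k} s \<circ> f) {..<k} {..<k}"
    by (rule bij_betw_trans[OF bf bij_betw_the_inv_into[OF bs]])
  have "bij_betw p {..<k} {..<k}"
    by (rule bij_betw_cong[THEN iffD1, OF _ bp0]) (auto simp: p_def)
  then have pp: "p permutes {0..<k}"
    by (intro bij_imp_permutes) (auto simp: p_def atLeast0LessThan)
  have "f = s \<circ> p"
  proof
    fix i show "f i = (s \<circ> p) i"
    proof (cases "i < k")
      case True
      have "f i \<in> s ` {..<k}" using True sim S_def by auto
      then have "s (the_inv_into {..<k} s (f i)) = f i" using injs by (simp add: f_the_inv_into_f)
      then show ?thesis using True by (simp add: p_def)
    next
      case False then show ?thesis using f by (simp add: p_def s_def)
    qed
  qed
  then show ?thesis using sInSM pp by blast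
qed


lemma cauchy_binet:
  fixes A B :: "nat \<Rightarrow> nat \<Rightarrow> real"
  shows "det (mat k k (\<lambda>(i,j). \<Sum>l<m. A i l * B l j)) =
    (\<Sum>s\<in>SM k m. det (mat k k (\<lambda>(i,j). A i (s j))) * det (mat k k (\<lambda>(i,j). B (s i) j)))"
proof -
  define bv where "bv l = vec k (\<lambda>j. B l j)" for l
  define F where "F = {f. (\<forall>i\<in>{0..<k}. f i \<in> {0..<m}) \<and> (\<forall>i. i \<notin> {0..<k} \<longrightarrow> f i = i)}"
  define T where "T f = (\<Prod>i\<in>{0..<k}. A i (f i)) * det (mat k k (\<lambda>(i,j). B (f i) j))" for f
  define Perm where "Perm = {p. p permutes {0..<k}}"
  define h where "h = (\<lambda>x :: (nat \<Rightarrow> nat) \<times> (nat \<Rightarrow> nat). fst x \<circ> snd x)"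
  have finF: "finite F" unfolding F_def by (rule finite_bounded_functions) auto
  have step1: "mat k k (\<lambda>(i,j). \<Sum>l<m. A i l * B l j) =
      mat\<^sub>r k k (\<lambda>i. finsum_vec TYPE(real) k (\<lambda>l. A i l \<cdot>\<^sub>v bv l) {0..<m})"
  proof (rule eq_matI)
    fix i j assume ij: "i < dim_row (mat\<^sub>r k k (\<lambda>i. finsum_vec TYPE(real) k (\<lambda>l. A i l \<cdot>\<^sub>v bv l) {0..<m}))"
      "j < dim_col (mat\<^sub>r k k (\<lambda>i. finsum_vec TYPE(real) k (\<lambda>l. A i l \<cdot>\<^sub>v bv l) {0..<m}))"
    then have "finsum_vec TYPE(real) k (\<lambda>l. A i l \<cdot>\<^sub>v bv l) {0..<m} $ j = (\<Sum>l\<in>{0..<m}. (A i l \<cdot>\<^sub>v bv l) $ j)"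
      by (intro index_finsum_vec) (auto simp: bv_def)
    then show "mat k k (\<lambda>(i,j). \<Sum>l<m. A i l * B l j) $$ (i, j) =
        mat\<^sub>r k k (\<lambda>i. finsum_vec TYPE(real) k (\<lambda>l. A i l \<cdot>\<^sub>v bv l) {0..<m}) $$ (i, j)"
      using ij by (simp add: bv_def atLeast0LessThan)
  qed auto
  have step2: "det (mat\<^sub>r k k (\<lambda>i. finsum_vec TYPE(real) k (\<lambda>l. A i l \<cdot>\<^sub>v bv l) {0..<m})) =
      (\<Sum>f\<in>F. det (mat\<^sub>r k k (\<lambda>i. A i (f i) \<cdot>\<^sub>v bv (f i))))"
    unfolding F_def by (rule det_linear_rows_sum) (auto simp: bv_def)
  have step3: "det (mat\<^sub>r k k (\<lambda>i. A i (f i) \<cdot>\<^sub>v bv (f i))) = T f" for f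
  proof -
    have "det (mat\<^sub>r k k (\<lambda>i. A i (f i) \<cdot>\<^sub>v bv (f i))) =
        prod (\<lambda>i. A i (f i)) {0..<k} * det (mat\<^sub>r k k (\<lambda>i. bv (f i)))"
      by (rule det_rows_mul) (auto simp: bv_def)
    moreover have "mat\<^sub>r k k (\<lambda>i. bv (f i)) = mat k k (\<lambda>(i,j). B (f i) j)"
      by (rule eq_matI) (auto simp: bv_def)
    ultimately show ?thesis by (simp add: T_def)
  qed
  have hinj: "inj_on h (SM k m \<times> Perm)"
  proof (rule inj_onI)
    fix x y assume "x \<in> SM k m \<times> Perm" "y \<in> SM k m \<times> Perm" "h x = h y"
    then show "x = y" using SM_inj[of "fst x" k m "fst y" "snd x" "snd y"]
      by (auto simp: h_def Perm_def prod_eq_iff)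
  qed
  have hsub: "h ` (SM k m \<times> Perm) \<subseteq> F"
  proof
    fix f assume "f \<in> h ` (SM k m \<times> Perm)"
    then obtain s p where s: "s \<in> SM k m" and p: "p permutes {0..<k}" and f: "f = s \<circ> p"
      by (auto simp: h_def Perm_def)
    have "s (p i) < m" if "i < k" for i
    proof -
      have "p i < k" using permutes_in_image[OF p, of i] that by simp
      then show ?thesis using s by (simp add: SM_def)
    qed
    moreover have "s (p i) = i" if "\<not> i < k" for i
      using permutes_not_in[OF p, of i] that s by (simp add: SM_def)
    ultimately show "f \<in> F" unfolding F_def f by auto
  qed
  have zero: "T f = 0" if fF: "f \<in> F - h ` (SM k m \<times> Perm)" for f
  proof -
    have "\<not> inj_on f {..<k}"
    proof
      assume "inj_on f {..<k}"
      moreover have "\<forall>i<k. f i < m" "\<forall>i. k \<le> i \<longrightarrow> f i = i" using fF by (auto simp: F_def)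
      ultimately obtain s p where "s \<in> SM k m" "p permutes {0..<k}" "f = s \<circ> p"
        using SM_surj[of k f m] by blast
      then have "f \<in> h ` (SM k m \<times> Perm)"
        unfolding h_def Perm_def by (intro image_eqI[of _ _ "(s, p)"]) auto
      then show False using fF by blast
    qed
    then obtain i j where ij: "i < k" "j < k" "i \<noteq> j" "f i = f j" by (auto simp: inj_on_def)
    have "det (mat k k (\<lambda>(i,j). B (f i) j)) = 0"
      by (rule det_identical_rows[of _ k i j]) (use ij in \<open>auto intro!: eq_vecI\<close>)
    then show ?thesis by (simp add: T_def)
  qed
  have "(\<Sum>f\<in>F. T f) = (\<Sum>f\<in>h ` (SM k m \<times> Perm). T f)"
    by (rule sum.mono_neutral_right[OF finF hsub]) (use zero in auto)
  also have "\<dots> = (\<Sum>x\<in>SM k m \<times> Perm. T (h x))" using sum.reindex[OF hinj, of T] by simp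
  also have "\<dots> = (\<Sum>s\<in>SM k m. \<Sum>p\<in>Perm. T (s \<circ> p))"
    by (simp add: sum.cartesian_product h_def case_prod_beta)
  also have "\<dots> = (\<Sum>s\<in>SM k m. det (mat k k (\<lambda>(i,j). A i (s j))) * det (mat k k (\<lambda>(i,j). B (s i) j)))"
  proof (rule sum.cong[OF refl])
    fix s assume s: "s \<in> SM k m"
    define Bs where "Bs = mat k k (\<lambda>(i,j). B (s i) j)"
    have Tp: "T (s \<circ> p) = signof p * (\<Prod>i\<in>{0..<k}. A i (s (p i))) * det Bs" if p: "p \<in> Perm" for p
    proof -
      have pp: "p permutes {0..<k}" using p by (simp add: Perm_def)
      have "mat k k (\<lambda>(i,j). B ((s \<circ> p) i) j) = mat k k (\<lambda>(i,j). Bs $$ (p i, j))"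
      proof (rule eq_matI)
        fix i j assume "i < dim_row (mat k k (\<lambda>(i,j). Bs $$ (p i, j)))" "j < dim_col (mat k k (\<lambda>(i,j). Bs $$ (p i, j)))"
        moreover then have "p i < k" using permutes_in_image[OF pp, of i] by simp
        ultimately show "mat k k (\<lambda>(i,j). B ((s \<circ> p) i) j) $$ (i, j) = mat k k (\<lambda>(i,j). Bs $$ (p i, j)) $$ (i, j)"
          by (simp add: Bs_def)
      qed auto
      then have "det (mat k k (\<lambda>(i,j). B ((s \<circ> p) i) j)) = signof p * det Bs"
        using det_permute_rows[of Bs k p] pp by (simp add: Bs_def)
      then show ?thesis by (simp add: T_def)
    qed
    have "(\<Sum>p\<in>Perm. T (s \<circ> p)) = (\<Sum>p\<in>Perm. signof p * (\<Prod>i\<in>{0..<k}. A i (s (p i)))) * det Bs"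
      by (simp add: sum_distrib_right Tp)
    also have "(\<Sum>p\<in>Perm. signof p * (\<Prod>i\<in>{0..<k}. A i (s (p i)))) = det (mat k k (\<lambda>(i,j). A i (s j)))"
      unfolding det_def'[OF mat_carrier] Perm_def
    proof (rule sum.cong[OF refl])
      fix p assume "p \<in> {p. p permutes {0..<k}}"
      then have pp: "p permutes {0..<k}" by simp
      have "(\<Prod>i\<in>{0..<k}. A i (s (p i))) = (\<Prod>i\<in>{0..<k}. mat k k (\<lambda>(i,j). A i (s j)) $$ (i, p i))"
      proof (rule prod.cong[OF refl])
        fix i assume "i \<in> {0..<k}"
        moreover then have "p i < k" using permutes_in_image[OF pp, of i] by simp
        ultimately show "A i (s (p i)) = mat k k (\<lambda>(i,j). A i (s j)) $$ (i, p i)" by simp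
      qed
      then show "signof p * (\<Prod>i\<in>{0..<k}. A i (s (p i))) = signof p * (\<Prod>i\<in>{0..<k}. mat k k (\<lambda>(i,j). A i (s j)) $$ (i, p i))"
        by simp
    qed
    finally show "(\<Sum>p\<in>Perm. T (s \<circ> p)) = det (mat k k (\<lambda>(i,j). A i (s j))) * det (mat k k (\<lambda>(i,j). B (s i) j))"
      by (simp add: Bs_def mult.commute comp_def)
  qed
  finally have "(\<Sum>f\<in>F. T f) = (\<Sum>s\<in>SM k m. det (mat k k (\<lambda>(i,j). A i (s j))) * det (mat k k (\<lambda>(i,j). B (s i) j)))" .
  then show ?thesis using step1 step2 step3 by simp
qed


lemma det_mat0: "det (mat 0 0 F) = (1::real)"
  by (simp add: det_def)

lemma tp_use: "totally_positive A \<Longrightarrow> strict_mono_on {..<K} r \<Longrightarrow> strict_mono_on {..<K} c \<Longrightarrow>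
  0 \<le> det (mat K K (\<lambda>(i,j). A (r i) (c j)))"
  unfolding totally_positive_def by blast

lemma main_claim:
  fixes g f :: "real fps"
  assumes g0: "fps_nth g 0 = 1" and f0: "fps_nth f 0 = 0" and f1: "fps_nth f 1 \<noteq> 0"
    and TP: "totally_positive (prod_matrix g f)"
  shows "strict_mono_on {..<k} r \<Longrightarrow> strict_mono_on {..<k} c \<Longrightarrow> (\<forall>i<k. r i < N) \<Longrightarrow>
     0 \<le> det (mat k k (\<lambda>(i,j). quasi_riordan g f (r i) (c j)))"
proof (induction N arbitrary: k r c)
  case 0
  then show ?case by (cases k) (auto simp: det_mat0)
next
  case (Suc N)
  note outerIH = Suc.IH
  show ?case using Suc.prems
  proof (induction k arbitrary: r c)
    case 0
    then show ?case by (simp add: det_mat0)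
  next
    case (Suc k)
    define R where "R = quasi_riordan g f"
    define M where "M = mat (Suc k) (Suc k) (\<lambda>(i,j). R (r i) (c j))"
    have Mc: "M \<in> carrier_mat (Suc k) (Suc k)" by (simp add: M_def)
    have rmono: "r 0 \<le> r i" if "i < Suc k" for i
      using strict_mono_onD[OF Suc.prems(1), of 0 i] that by (cases "i = 0") auto
    have cmono: "c 0 < c j" if "j < Suc k" "j \<noteq> 0" for j
      using Suc.prems(2) that by (auto simp: strict_mono_on_def)
    show ?case
    proof (cases "r 0 = 0")
      case True
      have row0: "M $$ (0, j) = (if c j = 0 then 1 else 0)" if "j < Suc k" for j
        using that True g0 f0 by (auto simp: M_def R_def quasi_riordan_def)
      have lap: "det M = (\<Sum>j<Suc k. M $$ (0,j) * cofactor M 0 j)"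
        by (rule laplace_expansion_row[OF Mc]) simp
      show ?thesis
      proof (cases "c 0 = 0")
        case False
        have "M $$ (0,j) = 0" if "j < Suc k" for j
          using row0[OF that] cmono[OF that] False by (cases "j = 0") auto
        then have "det M = 0" unfolding lap by simp
        then show ?thesis by (simp add: M_def R_def)
      next
        case c0: True
        have "M $$ (0,j) * cofactor M 0 j = (if j = 0 then cofactor M 0 0 else 0)" if "j < Suc k" for j
          using row0[OF that] cmono[OF that] c0 by (cases "j = 0") auto
        then have "det M = cofactor M 0 0" unfolding lap by simp
        also have "\<dots> = det (mat_delete M 0 0)" by (simp add: cofactor_def)
        also have "mat_delete M 0 0 = mat k k (\<lambda>(i,j). R (r (Suc i)) (c (Suc j)))"
          by (rule eq_matI) (auto simp: mat_delete_def M_def)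
        finally have dM: "det M = det (mat k k (\<lambda>(i,j). R (r (Suc i)) (c (Suc j))))" .
        have "0 \<le> det (mat k k (\<lambda>(i,j). quasi_riordan g f ((r \<circ> Suc) i) ((c \<circ> Suc) j)))"
        proof (rule Suc.IH)
          show "strict_mono_on {..<k} (r \<circ> Suc)" using Suc.prems(1) by (auto simp: strict_mono_on_def)
          show "strict_mono_on {..<k} (c \<circ> Suc)" using Suc.prems(2) by (auto simp: strict_mono_on_def)
          show "\<forall>i<k. (r \<circ> Suc) i < Suc N" using Suc.prems(3) by auto
        qed
        then show ?thesis using dM by (simp add: M_def R_def)
      qed
    next
      case False
      define A where "A i l = R (r i - 1) l" for i l
      define B where "B l j = prod_matrix g f l (c j)" for l j
      have "M = mat (Suc k) (Suc k) (\<lambda>(i,j). \<Sum>l<N. A i l * B l j)"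
      proof (rule eq_matI)
        fix i j assume ij: "i < dim_row (mat (Suc k) (Suc k) (\<lambda>(i,j). \<Sum>l<N. A i l * B l j))"
          "j < dim_col (mat (Suc k) (Suc k) (\<lambda>(i,j). \<Sum>l<N. A i l * B l j))"
        then have ri: "r i = Suc (r i - 1)" "r i - 1 < N" using rmono[of i] False Suc.prems(3) by auto
        have "R (r i) (c j) = (\<Sum>l<N. A i l * B l j)"
          unfolding A_def B_def R_def by (subst ri(1)) (rule qr_prod[OF g0 f0 f1 ri(2)])
        then show "M $$ (i, j) = mat (Suc k) (Suc k) (\<lambda>(i,j). \<Sum>l<N. A i l * B l j) $$ (i, j)"
          using ij by (simp add: M_def)
      qed (auto simp: M_def)
      then have "det M = det (mat (Suc k) (Suc k) (\<lambda>(i,j). \<Sum>l<N. A i l * B l j))" by simp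
      also have "\<dots> = (\<Sum>s\<in>SM (Suc k) N. det (mat (Suc k) (Suc k) (\<lambda>(i,j). A i (s j))) *
             det (mat (Suc k) (Suc k) (\<lambda>(i,j). B (s i) j)))"
        by (rule cauchy_binet)
      also have "\<dots> \<ge> 0"
      proof (rule sum_nonneg)
        fix s assume s: "s \<in> SM (Suc k) N"
        have sm: "strict_mono_on {..<Suc k} s" using s by (simp add: SM_def)
        have "0 \<le> det (mat (Suc k) (Suc k) (\<lambda>(i,j). quasi_riordan g f ((\<lambda>i. r i - 1) i) (s j)))"
        proof (rule outerIH)
          show "strict_mono_on {..<Suc k} (\<lambda>i. r i - 1)"
          proof (rule strict_mono_onI)
            fix x y assume "x \<in> {..<Suc k}" "y \<in> {..<Suc k}" "x < y"
            then show "r x - 1 < r y - 1"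
              using strict_mono_onD[OF Suc.prems(1), of x y] rmono[of x] False by auto
          qed
          show "strict_mono_on {..<Suc k} s" by (rule sm)
          show "\<forall>i<Suc k. r i - 1 < N"
          proof (intro allI impI)
            fix i assume "i < Suc k"
            then show "r i - 1 < N" using Suc.prems(3) rmono[of i] False by auto
          qed
        qed
        moreover have "0 \<le> det (mat (Suc k) (Suc k) (\<lambda>(i,j). prod_matrix g f (s i) (c j)))"
          by (rule tp_use[OF TP sm Suc.prems(2)])
        ultimately show "0 \<le> det (mat (Suc k) (Suc k) (\<lambda>(i,j). A i (s j))) *
             det (mat (Suc k) (Suc k) (\<lambda>(i,j). B (s i) j))"
          by (simp add: A_def B_def R_def)
      qed
      finally show ?thesis by (simp add: M_def R_def)
    qed
  qed
qed

theorem theorem3p2: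
  fixes g f :: "real fps"
  assumes "fps_nth g 0 = 1"
    and "fps_nth f 0 = 0"
    and "fps_nth f 1 \<noteq> 0"
    and "totally_positive (prod_matrix g f)"
  shows "totally_positive (quasi_riordan g f)"
  unfolding totally_positive_def
proof (intro allI impI)
  fix k r c assume r: "strict_mono_on {..<k} (r::nat \<Rightarrow> nat)" and c: "strict_mono_on {..<k} (c::nat \<Rightarrow> nat)"
  define N where "N = Suc (Max (r ` {..<k}))"
  have "\<forall>i<k. r i < N" unfolding N_def by (simp add: le_imp_less_Suc)
  then show "0 \<le> det (mat k k (\<lambda>(i, j). quasi_riordan g f (r i) (c j)))"
    using main_claim[OF assms r c] by blast
qed

end
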